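(* For any integer $t\geq 3$, there exist a connected graph $G$ and a function $g:V(G_1)\to V(G_2)$ such that $Dist(G)-Dist(F_G)=t$.
   Context: $Dist(H)$ is the least $t$ such that $H$ has a labeling $V(H)\to\{1,\dots,t\}$ preserved by no non-identity automorphism of $H$. Functigraph: for disjoint copies $G_1,G_2$ of a connected graph $G$ and a function $g:V(G_1)\to V(G_2)$, $F_G$ has vertex set $V(G_1)\cup V(G_2)$ and edge set $E(G_1)\cup E(G_2)\cup\{uv: u\in V(G_1),\ g(u)=v\}$. *)

theory Defs
  imports Main
begin

definition simple_graph :: "'a set \<Rightarrow> ('a \<Rightarrow> 'a \<Rightarrow> bool) \<Rightarrow> bool" where
  "simple_graph V E \<longleftrightarrow> finite V \<and>
     (\<forall>u v. E u v \<longrightarrow> u \<in> V \<and> v \<in> V \<and> u \<noteq> v \<and> E v u)"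

definition connected_graph :: "'a set \<Rightarrow> ('a \<Rightarrow> 'a \<Rightarrow> bool) \<Rightarrow> bool" where
  "connected_graph V E \<longleftrightarrow> simple_graph V E \<and> V \<noteq> {} \<and>
     (\<forall>u\<in>V. \<forall>v\<in>V. E\<^sup>*\<^sup>* u v)"

definition automorphism :: "'a set \<Rightarrow> ('a \<Rightarrow> 'a \<Rightarrow> bool) \<Rightarrow> ('a \<Rightarrow> 'a) \<Rightarrow> bool" where
  "automorphism V E \<sigma> \<longleftrightarrow> bij_betw \<sigma> V V \<and>
     (\<forall>u\<in>V. \<forall>v\<in>V. E u v \<longleftrightarrow> E (\<sigma> u) (\<sigma> v))"

definition distinguishing_labeling ::
  "'a set \<Rightarrow> ('a \<Rightarrow> 'a \<Rightarrow> bool) \<Rightarrow> nat \<Rightarrow> ('a \<Rightarrow> nat) \<Rightarrow> bool" where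
  "distinguishing_labeling V E t c \<longleftrightarrow> c ` V \<subseteq> {1..t} \<and>
     (\<forall>\<sigma>. automorphism V E \<sigma> \<and> (\<forall>v\<in>V. c (\<sigma> v) = c v) \<longrightarrow> (\<forall>v\<in>V. \<sigma> v = v))"

definition Dist :: "'a set \<Rightarrow> ('a \<Rightarrow> 'a \<Rightarrow> bool) \<Rightarrow> nat" where
  "Dist V E = (LEAST t. \<exists>c. distinguishing_labeling V E t c)"

text \<open>Functigraph: G_1 is the copy Inl ` V, G_2 the copy Inr ` V, and g maps V(G_1) to V(G_2)
(encoded as a function on V).\<close>
definition functigraph_V :: "'a set \<Rightarrow> ('a + 'a) set" where
  "functigraph_V V = Inl ` V \<union> Inr ` V"

fun functigraph_E :: "('a \<Rightarrow> 'a \<Rightarrow> bool) \<Rightarrow> 'a set \<Rightarrow> ('a \<Rightarrow> 'a) \<Rightarrow> ('a + 'a) \<Rightarrow> ('a + 'a) \<Rightarrow> bool" where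
  "functigraph_E E V g (Inl u) (Inl v) = E u v"
| "functigraph_E E V g (Inr u) (Inr v) = E u v"
| "functigraph_E E V g (Inl u) (Inr v) = (u \<in> V \<and> g u = v)"
| "functigraph_E E V g (Inr v) (Inl u) = (u \<in> V \<and> g u = v)"

end

theory Submission imports Defs begin

definition swp :: "'a \<Rightarrow> 'a \<Rightarrow> 'a \<Rightarrow> 'a" where
  "swp p q x = (if x = p then q else if x = q then p else x)"

lemma Dist_eqI:
  assumes "distinguishing_labeling V E k c"
    and "\<And>k' c'. k' < k \<Longrightarrow> \<not> distinguishing_labeling V E k' c'"
  shows "Dist V E = k"
  unfolding Dist_def
proof (rule Least_equality)
  show "\<exists>c. distinguishing_labeling V E k c" using assms(1) by blast
next
  fix y assume "\<exists>c. distinguishing_labeling V E y c"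
  then show "k \<le> y" using assms(2) not_less by blast
qed

lemma swp_auto:
  assumes pV: "p \<in> V" and qV: "q \<in> V" and pq: "p \<noteq> q"
    and tw: "\<And>x. x \<in> V \<Longrightarrow> x \<noteq> p \<Longrightarrow> x \<noteq> q \<Longrightarrow> (E p x \<longleftrightarrow> E q x) \<and> (E x p \<longleftrightarrow> E x q)"
    and n1: "\<not> E p q" "\<not> E q p" "\<not> E p p" "\<not> E q q"
  shows "automorphism V E (swp p q)"
  unfolding automorphism_def
proof
  have inv: "\<And>x. swp p q (swp p q x) = x" by (simp add: swp_def)
  have img: "\<And>x. x \<in> V \<Longrightarrow> swp p q x \<in> V" using pV qV by (simp add: swp_def)
  show "bij_betw (swp p q) V V"
    by (rule bij_betw_byWitness[where f'="swp p q"]) (use inv img in auto)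
  show "\<forall>u\<in>V. \<forall>v\<in>V. E u v = E (swp p q u) (swp p q v)"
  proof (intro ballI)
    fix u v assume uV: "u \<in> V" and vV: "v \<in> V"
    show "E u v = E (swp p q u) (swp p q v)"
      using tw[OF uV] tw[OF vV] n1 pq unfolding swp_def by (cases "u = p"; cases "u = q"; cases "v = p"; cases "v = q") auto
  qed
qed

lemma twins_lower:
  assumes SV: "S \<subseteq> V" and fin: "finite S" and lt: "k' < card S"
    and aut: "\<And>p q. p \<in> S \<Longrightarrow> q \<in> S \<Longrightarrow> p \<noteq> q \<Longrightarrow> automorphism V E (swp p q)"
  shows "\<not> distinguishing_labeling V E k' c"
proof
  assume dl: "distinguishing_labeling V E k' c"
  then have cV: "c ` S \<subseteq> {1..k'}" using SV unfolding distinguishing_labeling_def by blast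
  have "\<not> inj_on c S"
  proof
    assume "inj_on c S"
    then have "card S \<le> card {1..k'}" using card_inj_on_le[OF _ cV] by simp
    then show False using lt by simp
  qed
  then obtain p q where p: "p \<in> S" and q: "q \<in> S" and pq: "p \<noteq> q" and cpq: "c p = c q"
    unfolding inj_on_def by blast
  have "automorphism V E (swp p q)" using aut p q pq by blast
  moreover have "\<forall>v\<in>V. c (swp p q v) = c v" using cpq by (simp add: swp_def)
  ultimately have "\<forall>v\<in>V. swp p q v = v" using dl unfolding distinguishing_labeling_def by blast
  then have "swp p q p = p" using p SV by blast
  then show False using pq by (simp add: swp_def)
qed

definition SV :: "nat \<Rightarrow> nat set" where "SV m = {0..2*m}"
definition SE :: "nat \<Rightarrow> nat \<Rightarrow> nat \<Rightarrow> bool" where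
  "SE m u v = (u \<in> SV m \<and> v \<in> SV m \<and> u \<noteq> v \<and> (u = 0 \<or> v = 0))"
definition sg :: "nat \<Rightarrow> nat \<Rightarrow> nat" where "sg m i = (if i \<le> m then i else 0)"

lemma star_conn: "connected_graph (SV m) (SE m)"
proof -
  have "\<And>u v. u \<in> SV m \<Longrightarrow> v \<in> SV m \<Longrightarrow> (SE m)\<^sup>*\<^sup>* u v"
  proof -
    fix u v assume u: "u \<in> SV m" and v: "v \<in> SV m"
    have 0: "0 \<in> SV m" by (simp add: SV_def)
    have a: "(SE m)\<^sup>*\<^sup>* u 0"
    proof (cases "u = 0")
      case False
      then have "SE m u 0" using u 0 by (simp add: SE_def)
      then show ?thesis by (rule r_into_rtranclp)
    qed simp
    have b: "(SE m)\<^sup>*\<^sup>* 0 v"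
    proof (cases "v = 0")
      case False
      then have "SE m 0 v" using v 0 by (simp add: SE_def)
      then show ?thesis by (rule r_into_rtranclp)
    qed simp
    show "(SE m)\<^sup>*\<^sup>* u v" using a b by (rule rtranclp_trans)
  qed
  then show ?thesis unfolding connected_graph_def simple_graph_def
    by (auto simp: SE_def SV_def)
qed

lemma star_dist: assumes "m \<ge> 1" shows "Dist (SV m) (SE m) = 2*m"
proof (rule Dist_eqI[where c="\<lambda>i. if i = 0 then 1 else i"])
  show "distinguishing_labeling (SV m) (SE m) (2 * m) (\<lambda>i. if i = 0 then 1 else i)"
    unfolding distinguishing_labeling_def
  proof (intro conjI allI impI)
    show "(\<lambda>i. if i = 0 then 1 else i) ` SV m \<subseteq> {1..2 * m}" using assms by (auto simp: SV_def)
    fix \<sigma> assume "automorphism (SV m) (SE m) \<sigma> \<and> (\<forall>v\<in>SV m. (if \<sigma> v = 0 then 1 else \<sigma> v) = (if v = 0 then 1 else v))"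
    then have aut: "automorphism (SV m) (SE m) \<sigma>"
      and lab: "\<And>v. v \<in> SV m \<Longrightarrow> (if \<sigma> v = 0 then 1 else \<sigma> v) = (if v = 0 then 1 else v)" by blast+
    have bij: "bij_betw \<sigma> (SV m) (SV m)" and adj: "\<And>u v. u \<in> SV m \<Longrightarrow> v \<in> SV m \<Longrightarrow> SE m u v = SE m (\<sigma> u) (\<sigma> v)"
      using aut unfolding automorphism_def by blast+
    have inj: "inj_on \<sigma> (SV m)" using bij bij_betw_def by blast
    have mem: "\<And>v. v \<in> SV m \<Longrightarrow> \<sigma> v \<in> SV m" by (rule bij_betw_apply[OF bij])
    have big: "\<And>v. v \<in> SV m \<Longrightarrow> v \<ge> 2 \<Longrightarrow> \<sigma> v = v"
    proof -
      fix v assume v: "v \<in> SV m" "v \<ge> 2"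
      show "\<sigma> v = v" using lab[OF v(1)] v(2) by (auto split: if_splits)
    qed
    have 2: "2 \<in> SV m" using assms by (simp add: SV_def)
    have 0: "0 \<in> SV m" by (simp add: SV_def)
    have 1: "1 \<in> SV m" using assms by (simp add: SV_def)
    have "SE m 0 2" using 0 2 by (simp add: SE_def)
    then have "SE m (\<sigma> 0) 2" using adj[OF 0 2] big[OF 2] by simp
    moreover have "\<sigma> 0 \<le> 1" using lab[OF 0] by (auto split: if_splits)
    ultimately have s0: "\<sigma> 0 = 0" by (auto simp: SE_def)
    have "\<sigma> 1 \<le> 1" using lab[OF 1] by (cases "\<sigma> 1 = 0") simp_all
    moreover have "\<sigma> 1 \<noteq> 0" proof
      assume "\<sigma> 1 = 0"
      then have "\<sigma> 1 = \<sigma> 0" using s0 by simp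
      then have "(1::nat) = 0" using inj_onD[OF inj _ 1 0] by blast
      then show False by simp
    qed
    ultimately have s1: "\<sigma> 1 = 1" by simp
    show "\<forall>v\<in>SV m. \<sigma> v = v"
    proof
      fix v assume v: "v \<in> SV m"
      show "\<sigma> v = v" proof (cases "v \<ge> 2")
        case True then show ?thesis using big[OF v] by blast
      next
        case False then have "v = 0 \<or> v = 1" by linarith
        then show ?thesis using s0 s1 by blast
      qed
    qed
  qed
next
  fix k' :: nat and c' assume k': "k' < 2*m"
  show "\<not> distinguishing_labeling (SV m) (SE m) k' c'"
  proof (rule twins_lower[where S="{1..2*m}"])
    show "{1..2*m} \<subseteq> SV m" by (auto simp: SV_def)
    show "finite {1..2*m}" by simp
    show "k' < card {1..2*m}" using k' by (simp add: card_image)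
    fix p q assume p: "p \<in> {1..2*m}" and q: "q \<in> {1..2*m}" and pq: "p \<noteq> q"
    show "automorphism (SV m) (SE m) (swp p q)"
      by (rule swp_auto) (use p q pq in \<open>auto simp: SE_def SV_def\<close>)
  qed
qed

abbreviation FV :: "nat \<Rightarrow> (nat + nat) set" where "FV m \<equiv> functigraph_V (SV m)"
abbreviation FE :: "nat \<Rightarrow> (nat + nat) \<Rightarrow> (nat + nat) \<Rightarrow> bool" where
  "FE m \<equiv> functigraph_E (SE m) (SV m) (sg m)"

definition cF :: "nat \<Rightarrow> nat + nat \<Rightarrow> nat" where
  "cF m x = (case x of Inl i \<Rightarrow> if i = 0 then 1 else if i \<le> m then i else i - m
                     | Inr j \<Rightarrow> if j = 0 then 2 else if j \<le> m then 1 else j - m)"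

lemma FV_iff: "x \<in> FV m \<longleftrightarrow> (\<exists>i. i \<le> 2*m \<and> x = Inl i) \<or> (\<exists>j. j \<le> 2*m \<and> x = Inr j)"
  by (auto simp: functigraph_V_def SV_def)

lemma FE_LL: "FE m (Inl i) (Inl j) \<longleftrightarrow> i \<le> 2*m \<and> j \<le> 2*m \<and> i \<noteq> j \<and> (i = 0 \<or> j = 0)"
  by (auto simp: SE_def SV_def)
lemma FE_RR: "FE m (Inr i) (Inr j) \<longleftrightarrow> i \<le> 2*m \<and> j \<le> 2*m \<and> i \<noteq> j \<and> (i = 0 \<or> j = 0)"
  by (auto simp: SE_def SV_def)
lemma FE_LR: "FE m (Inl i) (Inr j) \<longleftrightarrow> i \<le> 2*m \<and> j = (if i \<le> m then i else 0)"
  by (auto simp: SV_def sg_def)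
lemma FE_RL: "FE m (Inr j) (Inl i) \<longleftrightarrow> i \<le> 2*m \<and> j = (if i \<le> m then i else 0)"
  by (auto simp: SV_def sg_def)

lemmas FE_simps = FE_LL FE_RR FE_LR FE_RL

lemma F_lower:
  assumes k': "k' < m"
  shows "\<not> distinguishing_labeling (FV m) (FE m) k' c"
proof (rule twins_lower[where S="Inr ` {m+1..2*m}"])
  show "Inr ` {m+1..2*m} \<subseteq> FV m" by (auto simp: functigraph_V_def SV_def)
  show "finite (Inr ` {m+1..2*m})" by simp
  have "card (Inr ` {m+1..2*m} :: (nat + nat) set) = card {m+1..2*m}" by (rule card_image) simp
  also have "card {m+1..2*m} = m" by simp
  finally show "k' < card (Inr ` {m+1..2*m})" using k' by (simp add: card_image)
  fix p q :: "nat + nat" assume p: "p \<in> Inr ` {m+1..2*m}" and q: "q \<in> Inr ` {m+1..2*m}" and pq: "p \<noteq> q"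
  obtain p' where p': "p = Inr p'" "m+1 \<le> p'" "p' \<le> 2*m" using p by auto
  obtain q' where q': "q = Inr q'" "m+1 \<le> q'" "q' \<le> 2*m" using q by auto
  have nb: "\<And>r x. m+1 \<le> r \<Longrightarrow> r \<le> 2*m \<Longrightarrow> x \<in> FV m \<Longrightarrow> x \<noteq> Inr r \<Longrightarrow>
      (FE m (Inr r) x \<longleftrightarrow> x = Inr 0) \<and> (FE m x (Inr r) \<longleftrightarrow> x = Inr 0)"
  proof -
    fix r x assume r: "m+1 \<le> r" "r \<le> 2*m" and x: "x \<in> FV m" "x \<noteq> Inr r"
    show "(FE m (Inr r) x \<longleftrightarrow> x = Inr 0) \<and> (FE m x (Inr r) \<longleftrightarrow> x = Inr 0)"
      using x r unfolding FV_iff by (elim disjE exE conjE; hypsubst) (auto simp: SE_def SV_def sg_def)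
  qed
  show "automorphism (FV m) (FE m) (swp p q)"
  proof (rule swp_auto)
    show "p \<in> FV m" "q \<in> FV m" using p' q' by (auto simp: functigraph_V_def SV_def)
    show "p \<noteq> q" by (rule pq)
    show "\<not> FE m p q" "\<not> FE m q p" "\<not> FE m p p" "\<not> FE m q q"
      using p' q' by (simp_all add: SE_def)
    fix x assume "x \<in> FV m" "x \<noteq> p" "x \<noteq> q"
    then show "(FE m p x \<longleftrightarrow> FE m q x) \<and> (FE m x p \<longleftrightarrow> FE m x q)"
      using nb[of p' x] nb[of q' x] p' q' by simp
  qed
qed

lemma small_nbr:
  assumes "x \<in> FV m" "x \<noteq> Inl 0" "x \<noteq> Inr 0"
  shows "\<exists>a b. \<forall>y. FE m x y \<longrightarrow> y = a \<or> y = b"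
proof (cases x)
  case (Inl i)
  then have i: "i \<noteq> 0" using assms by simp
  have "\<forall>y. FE m x y \<longrightarrow> y = Inl 0 \<or> y = Inr (sg m i)"
  proof (intro allI impI)
    fix y assume "FE m x y"
    then show "y = Inl 0 \<or> y = Inr (sg m i)" using Inl i by (cases y) (auto simp: SE_def)
  qed
  then show ?thesis by blast
next
  case (Inr j)
  then have j: "j \<noteq> 0" using assms by simp
  have "\<forall>y. FE m x y \<longrightarrow> y = Inr 0 \<or> y = Inl j"
  proof (intro allI impI)
    fix y assume "FE m x y"
    then show "y = Inr 0 \<or> y = Inl j" using Inr j by (cases y) (auto simp: SE_def sg_def split: if_splits)
  qed
  then show ?thesis by blast
qed

definition big :: "nat \<Rightarrow> nat + nat \<Rightarrow> bool" where
  "big m x = (\<exists>y z w. y \<in> FV m \<and> z \<in> FV m \<and> w \<in> FV m \<and> y \<noteq> z \<and> y \<noteq> w \<and> z \<noteq> w \<and>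
      FE m x y \<and> FE m x z \<and> FE m x w)"

lemma big_cases: assumes "x \<in> FV m" "big m x" shows "x = Inl 0 \<or> x = Inr 0"
proof (rule ccontr)
  assume "\<not> (x = Inl 0 \<or> x = Inr 0)"
  then obtain a b where ab: "\<forall>y. FE m x y \<longrightarrow> y = a \<or> y = b" using small_nbr[OF assms(1)] by blast
  from assms(2) obtain y z w where "y \<noteq> z" "y \<noteq> w" "z \<noteq> w" "FE m x y" "FE m x z" "FE m x w"
    unfolding big_def by blast
  then show False using ab by metis
qed

lemma big_a0: assumes "m \<ge> 1" shows "big m (Inl 0)"
  unfolding big_def
  by (rule exI[of _ "Inl 1"], rule exI[of _ "Inl 2"], rule exI[of _ "Inr 0"])
     (use assms in \<open>auto simp: functigraph_V_def SV_def SE_def sg_def\<close>)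

lemma big_b0: assumes "m \<ge> 1" shows "big m (Inr 0)"
  unfolding big_def
  by (rule exI[of _ "Inr 1"], rule exI[of _ "Inr 2"], rule exI[of _ "Inl 0"])
     (use assms in \<open>auto simp: functigraph_V_def SV_def SE_def sg_def\<close>)

lemma F_upper:
  assumes m: "m \<ge> 2"
  shows "distinguishing_labeling (FV m) (FE m) m (cF m)"
  unfolding distinguishing_labeling_def
proof (intro conjI allI impI)
  show "cF m ` FV m \<subseteq> {1..m}" using m by (auto simp: cF_def functigraph_V_def SV_def)
  fix \<sigma> assume H: "automorphism (FV m) (FE m) \<sigma> \<and> (\<forall>v\<in>FV m. cF m (\<sigma> v) = cF m v)"
  then have bij: "bij_betw \<sigma> (FV m) (FV m)"
    and adj: "\<And>u v. u \<in> FV m \<Longrightarrow> v \<in> FV m \<Longrightarrow> FE m u v = FE m (\<sigma> u) (\<sigma> v)"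
    and lab: "\<And>v. v \<in> FV m \<Longrightarrow> cF m (\<sigma> v) = cF m v"
    unfolding automorphism_def by blast+
  have inj: "inj_on \<sigma> (FV m)" using bij bij_betw_def by blast
  have mem: "\<And>v. v \<in> FV m \<Longrightarrow> \<sigma> v \<in> FV m" by (rule bij_betw_apply[OF bij])
  have neq: "\<And>u v. u \<in> FV m \<Longrightarrow> v \<in> FV m \<Longrightarrow> u \<noteq> v \<Longrightarrow> \<sigma> u \<noteq> \<sigma> v"
    using inj unfolding inj_on_def by blast
  have bigs: "\<And>x. x \<in> FV m \<Longrightarrow> big m x \<Longrightarrow> big m (\<sigma> x)"
  proof -
    fix x assume x: "x \<in> FV m" and b: "big m x"
    from b obtain y z w where yzw: "y \<in> FV m" "z \<in> FV m" "w \<in> FV m" "y \<noteq> z" "y \<noteq> w" "z \<noteq> w"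
      "FE m x y" "FE m x z" "FE m x w" unfolding big_def by blast
    show "big m (\<sigma> x)" unfolding big_def
      apply (rule exI[of _ "\<sigma> y"], rule exI[of _ "\<sigma> z"], rule exI[of _ "\<sigma> w"])
      using yzw mem neq adj[OF x] by simp
  qed
  have A0: "Inl 0 \<in> FV m" and B0: "Inr 0 \<in> FV m" by (auto simp: functigraph_V_def SV_def)
  have sa0: "\<sigma> (Inl 0) = Inl 0"
  proof -
    have "\<sigma> (Inl 0) = Inl 0 \<or> \<sigma> (Inl 0) = Inr 0"
      using big_cases[OF mem[OF A0] bigs[OF A0 big_a0]] m by simp
    moreover have "cF m (\<sigma> (Inl 0)) = 1" using lab[OF A0] by (simp add: cF_def)
    ultimately show ?thesis by (auto simp: cF_def)
  qed
  have sb0: "\<sigma> (Inr 0) = Inr 0"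
  proof -
    have "\<sigma> (Inr 0) = Inl 0 \<or> \<sigma> (Inr 0) = Inr 0"
      using big_cases[OF mem[OF B0] bigs[OF B0 big_b0]] m by simp
    moreover have "cF m (\<sigma> (Inr 0)) = 2" using lab[OF B0] by (simp add: cF_def)
    ultimately show ?thesis by (auto simp: cF_def)
  qed
  have s1: "\<And>i. 1 \<le> i \<Longrightarrow> i \<le> m \<Longrightarrow> \<sigma> (Inl i) = Inl i"
  proof -
    fix i assume i: "1 \<le> i" "i \<le> m"
    have iV: "Inl i \<in> FV m" using i by (auto simp: functigraph_V_def SV_def)
    define y where "y = \<sigma> (Inl i)"
    have yV: "y \<in> FV m" using mem[OF iV] y_def by simp
    have e1: "FE m y (Inl 0)" using adj[OF iV A0] sa0 i unfolding y_def by (simp add: SE_def SV_def)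
    have e2: "\<not> FE m y (Inr 0)" using adj[OF iV B0] sb0 i unfolding y_def by (simp add: SV_def sg_def)
    have e3: "y \<noteq> Inr 0" using neq[OF iV B0] sb0 unfolding y_def by simp
    have e4: "cF m y = i" using lab[OF iV] i unfolding y_def by (simp add: cF_def)
    show "\<sigma> (Inl i) = Inl i" unfolding y_def[symmetric]
      using yV e1 e2 e3 e4 unfolding FV_iff
      by (elim disjE exE conjE; hypsubst) (auto simp: SE_def SV_def sg_def cF_def split: if_splits)
  qed
  have s2: "\<And>j. m < j \<Longrightarrow> j \<le> 2*m \<Longrightarrow> \<sigma> (Inl j) = Inl j"
  proof -
    fix j assume j: "m < j" "j \<le> 2*m"
    have jV: "Inl j \<in> FV m" using j by (auto simp: functigraph_V_def SV_def)
    define y where "y = \<sigma> (Inl j)"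
    have yV: "y \<in> FV m" using mem[OF jV] y_def by simp
    have e1: "FE m y (Inl 0)" using adj[OF jV A0] sa0 j unfolding y_def by (simp add: SE_def SV_def)
    have e2: "FE m y (Inr 0)" using adj[OF jV B0] sb0 j unfolding y_def by (simp add: SV_def sg_def)
    have e4: "cF m y = j - m" using lab[OF jV] j unfolding y_def by (simp add: cF_def)
    show "\<sigma> (Inl j) = Inl j" unfolding y_def[symmetric]
      using yV e1 e2 e4 j unfolding FV_iff
      by (elim disjE exE conjE; hypsubst) (auto simp: SE_def SV_def sg_def cF_def split: if_splits)
  qed
  have s3: "\<And>i. 1 \<le> i \<Longrightarrow> i \<le> m \<Longrightarrow> \<sigma> (Inr i) = Inr i"
  proof -
    fix i assume i: "1 \<le> i" "i \<le> m"
    have iV: "Inl i \<in> FV m" using i by (auto simp: functigraph_V_def SV_def)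
    have iV': "Inr i \<in> FV m" using i by (auto simp: functigraph_V_def SV_def)
    define y where "y = \<sigma> (Inr i)"
    have yV: "y \<in> FV m" using mem[OF iV'] y_def by simp
    have e1: "FE m y (Inl i)" using adj[OF iV' iV] s1[OF i] i unfolding y_def by (simp add: SV_def sg_def)
    have e3: "y \<noteq> Inl 0" using neq[OF iV' A0] sa0 unfolding y_def by simp
    show "\<sigma> (Inr i) = Inr i" unfolding y_def[symmetric]
      using yV e1 e3 i unfolding FV_iff
      by (elim disjE exE conjE; hypsubst) (auto simp: SE_def SV_def sg_def split: if_splits)
  qed
  have s4: "\<And>j. m < j \<Longrightarrow> j \<le> 2*m \<Longrightarrow> \<sigma> (Inr j) = Inr j"
  proof -
    fix j assume j: "m < j" "j \<le> 2*m"
    have jV: "Inr j \<in> FV m" using j by (auto simp: functigraph_V_def SV_def)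
    define y where "y = \<sigma> (Inr j)"
    have yV: "y \<in> FV m" using mem[OF jV] y_def by simp
    have e4: "cF m y = j - m" using lab[OF jV] j unfolding y_def by (simp add: cF_def)
    have nL: "\<And>k. k \<le> 2*m \<Longrightarrow> y \<noteq> Inl k"
    proof -
      fix k assume k: "k \<le> 2*m"
      have kV: "Inl k \<in> FV m" using k by (auto simp: functigraph_V_def SV_def)
      have "\<sigma> (Inl k) = Inl k" using sa0 s1 s2 k by (cases "k = 0"; cases "k \<le> m") auto
      then show "y \<noteq> Inl k" using neq[OF jV kV] unfolding y_def by simp
    qed
    have nR: "\<And>k. k \<le> m \<Longrightarrow> y \<noteq> Inr k"
    proof -
      fix k assume k: "k \<le> m"
      have kV: "Inr k \<in> FV m" using k by (auto simp: functigraph_V_def SV_def)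
      have "\<sigma> (Inr k) = Inr k" using sb0 s3 k by (cases "k = 0") auto
      then show "y \<noteq> Inr k" using neq[OF jV kV] j k unfolding y_def by simp
    qed
    obtain k where k: "k \<le> 2*m" "y = Inr k" using yV nL unfolding FV_iff by blast
    have "m < k" using nR k by (metis not_less)
    then have "k = j" using e4 k j by (simp add: cF_def)
    then show "\<sigma> (Inr j) = Inr j" using k y_def by simp
  qed
  show "\<forall>v\<in>FV m. \<sigma> v = v"
  proof
    fix v assume "v \<in> FV m"
    then show "\<sigma> v = v" unfolding FV_iff
    proof (elim disjE exE conjE)
      fix i assume "i \<le> 2*m" "v = Inl i"
      then show "\<sigma> v = v" using sa0 s1 s2 by (cases "i = 0"; cases "i \<le> m") auto
    next
      fix i assume "i \<le> 2*m" "v = Inr i"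
      then show "\<sigma> v = v" using sb0 s3 s4 by (cases "i = 0"; cases "i \<le> m") auto
    qed
  qed
qed

lemma F_dist: assumes "m \<ge> 2" shows "Dist (FV m) (FE m) = m"
  by (rule Dist_eqI[OF F_upper[OF assms]]) (rule F_lower)

theorem lemma2p8:
  fixes t :: int
  assumes "t \<ge> 3"
  shows "\<exists>(V :: nat set) E g. connected_graph V E \<and> g ` V \<subseteq> V \<and>
    int (Dist V E) - int (Dist (functigraph_V V) (functigraph_E E V g)) = t"
proof (intro exI conjI)
  define m where "m = nat t"
  have m: "m \<ge> 2" and tm: "t = int m" using assms unfolding m_def by auto
  show "connected_graph (SV m) (SE m)" by (rule star_conn)
  show "sg m ` SV m \<subseteq> SV m" by (auto simp: sg_def SV_def)
  show "int (Dist (SV m) (SE m)) - int (Dist (functigraph_V (SV m)) (functigraph_E (SE m) (SV m) (sg m))) = t"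
    using star_dist[of m] F_dist[OF m] m tm by simp
qed

end
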